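(* (i) For every $\mathbf A\in\mathsf{ICM}$, the ring reduct $\mathbf A^-$ is a reduced commutative ring. (ii) For every reduced commutative ring $\mathbf A$ there is $\mathbf B\in\mathsf{ICM}$ such that $\mathbf A$ is a subring of $\mathbf B^-$.
   Context: Rings are unital in the language $\{+,\cdot,-,0,1\}$; reduced means no nonzero nilpotents. A field is weakly rooted if it has characteristic $0$, or prime characteristic $p$ with every element having a $p$-th root. Weak inverse: $a^*=a^{-1}$ if $a\ne0$, $0^*=0$; weak $p$-root: $r_p(a)=\sqrt[p]{a}$ if the characteristic is $p$, else $0$. An implicitly closed field is a weakly rooted field expanded by $(\,)^*$ and all $r_p$; $\mathsf{ICM}$ is the class of algebras isomorphic to subalgebras of direct products of implicitly closed fields. For $\mathbf A\in\mathsf{ICM}$, $\mathbf A^-$ denotes its reduct to $\{+,\cdot,-,0,1\}$. *)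

theory Defs
  imports "HOL-Algebra.Algebra"
begin

text \<open>Algebras in the language of implicitly closed fields:
  ring operations (+, *, 0, 1 from the HOL-Algebra ring record), an explicit
  unary minus, the weak inverse, and the weak p-th roots (one for every prime p).\<close>

record 'a icalg = "'a ring" +
  neg   :: "'a \<Rightarrow> 'a"
  winv  :: "'a \<Rightarrow> 'a"
  wroot :: "nat \<Rightarrow> 'a \<Rightarrow> 'a"

text \<open>The ring reduct A^- (to the language {+, *, -, 0, 1}; in HOL-Algebra the minus
  of a ring is determined by the additive group).\<close>

definition reduct :: "('a, 'm) icalg_scheme \<Rightarrow> 'a ring" where
  "reduct A = \<lparr>carrier = carrier A, monoid.mult = monoid.mult A, one = one A,
               ring.zero = ring.zero A, ring.add = ring.add A\<rparr>"

definition ring_char :: "('a, 'm) ring_scheme \<Rightarrow> nat" where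
  "ring_char R = (if \<exists>n::nat. n > 0 \<and> add_pow R n \<one>\<^bsub>R\<^esub> = \<zero>\<^bsub>R\<^esub>
                  then (LEAST n::nat. n > 0 \<and> add_pow R n \<one>\<^bsub>R\<^esub> = \<zero>\<^bsub>R\<^esub>) else 0)"

definition weakly_rooted :: "('a, 'm) ring_scheme \<Rightarrow> bool" where
  "weakly_rooted F \<longleftrightarrow> field F \<and>
     (ring_char F = 0 \<or>
      (Factorial_Ring.prime (ring_char F) \<and>
       (\<forall>a\<in>carrier F. \<exists>b\<in>carrier F. b [^]\<^bsub>F\<^esub> ring_char F = a)))"

definition implicitly_closed_field :: "('a, 'm) icalg_scheme \<Rightarrow> bool" where
  "implicitly_closed_field F \<longleftrightarrow> weakly_rooted F \<and>
     (\<forall>a\<in>carrier F. neg F a = \<ominus>\<^bsub>F\<^esub> a) \<and>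
     (\<forall>a\<in>carrier F. a \<noteq> \<zero>\<^bsub>F\<^esub> \<longrightarrow> winv F a = inv\<^bsub>F\<^esub> a) \<and>
     winv F \<zero>\<^bsub>F\<^esub> = \<zero>\<^bsub>F\<^esub> \<and>
     (\<forall>p. Factorial_Ring.prime (p::nat) \<longrightarrow> (\<forall>a\<in>carrier F.
        (if ring_char F = p
         then wroot F p a \<in> carrier F \<and> wroot F p a [^]\<^bsub>F\<^esub> p = a
         else wroot F p a = \<zero>\<^bsub>F\<^esub>)))"

definition is_icalg :: "('a, 'm) icalg_scheme \<Rightarrow> bool" where
  "is_icalg A \<longleftrightarrow>
     \<zero>\<^bsub>A\<^esub> \<in> carrier A \<and> \<one>\<^bsub>A\<^esub> \<in> carrier A \<and>
     (\<forall>x\<in>carrier A. \<forall>y\<in>carrier A. x \<oplus>\<^bsub>A\<^esub> y \<in> carrier A \<and> x \<otimes>\<^bsub>A\<^esub> y \<in> carrier A) \<and>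
     (\<forall>x\<in>carrier A. neg A x \<in> carrier A \<and> winv A x \<in> carrier A \<and>
        (\<forall>p. Factorial_Ring.prime (p::nat) \<longrightarrow> wroot A p x \<in> carrier A))"

definition embeds_into_product ::
  "('a, 'm) icalg_scheme \<Rightarrow> 'i set \<Rightarrow> ('i \<Rightarrow> ('f, 'n) icalg_scheme) \<Rightarrow> ('a \<Rightarrow> 'i \<Rightarrow> 'f) \<Rightarrow> bool" where
  "embeds_into_product A I F h \<longleftrightarrow>
     inj_on h (carrier A) \<and>
     h ` carrier A \<subseteq> (\<Pi>\<^sub>E i\<in>I. carrier (F i)) \<and>
     h \<zero>\<^bsub>A\<^esub> = (\<lambda>i\<in>I. \<zero>\<^bsub>F i\<^esub>) \<and>
     h \<one>\<^bsub>A\<^esub> = (\<lambda>i\<in>I. \<one>\<^bsub>F i\<^esub>) \<and>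
     (\<forall>x\<in>carrier A. \<forall>y\<in>carrier A.
        h (x \<oplus>\<^bsub>A\<^esub> y) = (\<lambda>i\<in>I. h x i \<oplus>\<^bsub>F i\<^esub> h y i) \<and>
        h (x \<otimes>\<^bsub>A\<^esub> y) = (\<lambda>i\<in>I. h x i \<otimes>\<^bsub>F i\<^esub> h y i)) \<and>
     (\<forall>x\<in>carrier A.
        h (neg A x) = (\<lambda>i\<in>I. neg (F i) (h x i)) \<and>
        h (winv A x) = (\<lambda>i\<in>I. winv (F i) (h x i)) \<and>
        (\<forall>p. Factorial_Ring.prime (p::nat) \<longrightarrow> h (wroot A p x) = (\<lambda>i\<in>I. wroot (F i) p (h x i))))"

text \<open>Membership in ICM, with the index set living in type 'i and the fields
  living in type 'f (made explicit via TYPE arguments).\<close>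

definition ICM :: "'i itself \<Rightarrow> 'f itself \<Rightarrow> ('a, 'm) icalg_scheme \<Rightarrow> bool" where
  "ICM _ _ A \<longleftrightarrow> is_icalg A \<and>
     (\<exists>(I::'i set) (F::'i \<Rightarrow> 'f icalg) h.
        (\<forall>i\<in>I. implicitly_closed_field (F i)) \<and> embeds_into_product A I F h)"

definition reduced_ring :: "('a, 'm) ring_scheme \<Rightarrow> bool" where
  "reduced_ring R \<longleftrightarrow>
     (\<forall>a\<in>carrier R. \<forall>n::nat. a [^]\<^bsub>R\<^esub> n = \<zero>\<^bsub>R\<^esub> \<longrightarrow> a = \<zero>\<^bsub>R\<^esub>)"

end

theory Submission
  imports Defs "HOL-Library.Nat_Bijection"
begin

lemma pullback_cring:
  fixes A :: "('a,'m) ring_scheme" and G :: "'i \<Rightarrow> ('f,'n) ring_scheme" and h :: "'a \<Rightarrow> 'i \<Rightarrow> 'f"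
  assumes G: "\<And>i. i\<in>I \<Longrightarrow> cring (G i)"
  and hc: "\<And>x i. x \<in> carrier A \<Longrightarrow> i\<in>I \<Longrightarrow> h x i \<in> carrier (G i)"
  and inj: "\<And>x y. x\<in>carrier A \<Longrightarrow> y \<in> carrier A \<Longrightarrow> (\<And>i. i\<in>I \<Longrightarrow> h x i = h y i) \<Longrightarrow> x = y"
  and z: "\<zero>\<^bsub>A\<^esub> \<in> carrier A" and o: "\<one>\<^bsub>A\<^esub> \<in> carrier A"
  and cla: "\<And>x y. x\<in>carrier A \<Longrightarrow> y\<in>carrier A \<Longrightarrow> x \<oplus>\<^bsub>A\<^esub> y \<in> carrier A"
  and clm: "\<And>x y. x\<in>carrier A \<Longrightarrow> y\<in>carrier A \<Longrightarrow> x \<otimes>\<^bsub>A\<^esub> y \<in> carrier A"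
  and h0: "\<And>i. i\<in>I \<Longrightarrow> h \<zero>\<^bsub>A\<^esub> i = \<zero>\<^bsub>G i\<^esub>"
  and h1: "\<And>i. i\<in>I \<Longrightarrow> h \<one>\<^bsub>A\<^esub> i = \<one>\<^bsub>G i\<^esub>"
  and hadd: "\<And>x y i. x\<in>carrier A \<Longrightarrow> y\<in>carrier A \<Longrightarrow> i\<in>I \<Longrightarrow> h (x \<oplus>\<^bsub>A\<^esub> y) i = h x i \<oplus>\<^bsub>G i\<^esub> h y i"
  and hmul: "\<And>x y i. x\<in>carrier A \<Longrightarrow> y\<in>carrier A \<Longrightarrow> i\<in>I \<Longrightarrow> h (x \<otimes>\<^bsub>A\<^esub> y) i = h x i \<otimes>\<^bsub>G i\<^esub> h y i"
  and neg: "\<And>x. x \<in> carrier A \<Longrightarrow> \<exists>y\<in>carrier A. x \<oplus>\<^bsub>A\<^esub> y = \<zero>\<^bsub>A\<^esub>"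
  shows "cring A"
proof -
  note S = hc cla clm h0 h1 hadd hmul z o
  note C = cring.cring_simprules[OF G]
  show ?thesis
proof (rule cringI)
  show "abelian_group A"
  proof (rule abelian_groupI)
    fix x y z assume xyz: "x \<in> carrier A" "y \<in> carrier A" "z \<in> carrier A"
    show "x \<oplus>\<^bsub>A\<^esub> y \<oplus>\<^bsub>A\<^esub> z = x \<oplus>\<^bsub>A\<^esub> (y \<oplus>\<^bsub>A\<^esub> z)"
      by (rule inj) (use xyz in \<open>simp_all add: S C\<close>)
  next
    fix x y assume xyz: "x \<in> carrier A" "y \<in> carrier A"
    show "x \<oplus>\<^bsub>A\<^esub> y = y \<oplus>\<^bsub>A\<^esub> x"
      by (rule inj) (use xyz in \<open>simp_all add: S C\<close>)
  next
    fix x assume xyz: "x \<in> carrier A"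
    show "\<zero>\<^bsub>A\<^esub> \<oplus>\<^bsub>A\<^esub> x = x"
      by (rule inj) (use xyz in \<open>simp_all add: S C\<close>)
  next
    fix x assume xyz: "x \<in> carrier A"
    obtain y where y: "y \<in> carrier A" "x \<oplus>\<^bsub>A\<^esub> y = \<zero>\<^bsub>A\<^esub>" using neg[OF xyz] by blast
    have "y \<oplus>\<^bsub>A\<^esub> x = \<zero>\<^bsub>A\<^esub>"
      by (rule inj) (use xyz y in \<open>simp_all add: S C flip: y(2)\<close>)
    then show "\<exists>y\<in>carrier A. y \<oplus>\<^bsub>A\<^esub> x = \<zero>\<^bsub>A\<^esub>" using y by blast
  qed (simp_all add: S)
next
  show "comm_monoid A"
  proof (rule comm_monoidI)
    fix x y z assume xyz: "x \<in> carrier A" "y \<in> carrier A" "z \<in> carrier A"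
    show "x \<otimes>\<^bsub>A\<^esub> y \<otimes>\<^bsub>A\<^esub> z = x \<otimes>\<^bsub>A\<^esub> (y \<otimes>\<^bsub>A\<^esub> z)"
      by (rule inj) (use xyz in \<open>simp_all add: S C\<close>)
  next
    fix x y assume xyz: "x \<in> carrier A" "y \<in> carrier A"
    show "x \<otimes>\<^bsub>A\<^esub> y = y \<otimes>\<^bsub>A\<^esub> x"
      by (rule inj) (use xyz in \<open>simp_all add: S C\<close>)
  next
    fix x assume xyz: "x \<in> carrier A"
    show "\<one>\<^bsub>A\<^esub> \<otimes>\<^bsub>A\<^esub> x = x"
      by (rule inj) (use xyz in \<open>simp_all add: S C\<close>)
  qed (simp_all add: S)
next
  fix x y z assume xyz: "x \<in> carrier A" "y \<in> carrier A" "z \<in> carrier A"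
  show "(x \<oplus>\<^bsub>A\<^esub> y) \<otimes>\<^bsub>A\<^esub> z = x \<otimes>\<^bsub>A\<^esub> z \<oplus>\<^bsub>A\<^esub> y \<otimes>\<^bsub>A\<^esub> z"
    by (rule inj) (use xyz in \<open>simp_all add: S C\<close>)
qed
qed

lemma field_pow_zero:
  assumes "field K" "x \<in> carrier K" "x [^]\<^bsub>K\<^esub> (n::nat) = \<zero>\<^bsub>K\<^esub>"
  shows "x = \<zero>\<^bsub>K\<^esub>"
  using assms(3)
proof (induction n)
  case 0
  then show ?case using assms(1) by (simp add: domain.one_not_zero field.axioms(1))
next
  case (Suc n)
  interpret field K by fact
  have "x [^]\<^bsub>K\<^esub> n \<otimes>\<^bsub>K\<^esub> x = \<zero>\<^bsub>K\<^esub>" using Suc.prems by simp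
  then have "x [^]\<^bsub>K\<^esub> n = \<zero>\<^bsub>K\<^esub> \<or> x = \<zero>\<^bsub>K\<^esub>" using integral assms(2) by blast
  then show ?case using Suc.IH by blast
qed

lemma icf_field: "implicitly_closed_field F \<Longrightarrow> field F"
  unfolding implicitly_closed_field_def weakly_rooted_def by blast

lemma part1:
  fixes A :: "('a, 'm) icalg_scheme"
  assumes "ICM TYPE('i) TYPE('f) A"
  shows "cring (reduct A) \<and> reduced_ring (reduct A)"
proof -
  from assms obtain I :: "'i set" and F :: "'i \<Rightarrow> 'f icalg" and h where
    isa: "is_icalg A" and F: "\<And>i. i\<in>I \<Longrightarrow> implicitly_closed_field (F i)" and
    emb: "embeds_into_product A I F h"
    unfolding ICM_def by blast
  have Ff: "\<And>i. i\<in>I \<Longrightarrow> field (F i)" using F icf_field by blast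
  have Fc: "\<And>i. i\<in>I \<Longrightarrow> cring (F i)" using Ff field.axioms(1) domain.axioms(1) by blast
  have Fneg: "\<And>i a. i\<in>I \<Longrightarrow> a \<in> carrier (F i) \<Longrightarrow> neg (F i) a = \<ominus>\<^bsub>F i\<^esub> a"
    using F unfolding implicitly_closed_field_def by blast
  have rc: "carrier (reduct A) = carrier A" and rm: "monoid.mult (reduct A) = monoid.mult A"
    and ro: "one (reduct A) = one A" and rz: "ring.zero (reduct A) = ring.zero A" and ra: "add (reduct A) = add A"
    by (simp_all add: reduct_def)
  note E = emb[unfolded embeds_into_product_def]
  have hPi: "\<And>x. x \<in> carrier A \<Longrightarrow> h x \<in> (\<Pi>\<^sub>E i\<in>I. carrier (F i))" using E by blast
  have hc: "\<And>x i. x \<in> carrier A \<Longrightarrow> i\<in>I \<Longrightarrow> h x i \<in> carrier (F i)" using hPi by blast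
  have inj: "\<And>x y. x\<in>carrier A \<Longrightarrow> y \<in> carrier A \<Longrightarrow> (\<And>i. i\<in>I \<Longrightarrow> h x i = h y i) \<Longrightarrow> x = y"
  proof -
    fix x y assume xy: "x\<in>carrier A" "y \<in> carrier A" and eq: "\<And>i. i\<in>I \<Longrightarrow> h x i = h y i"
    have "h x = h y" using hPi[OF xy(1)] hPi[OF xy(2)] eq by (intro PiE_ext) auto
    then show "x = y" using E xy by (meson inj_onD)
  qed
  have z: "\<zero>\<^bsub>A\<^esub> \<in> carrier A" and o: "\<one>\<^bsub>A\<^esub> \<in> carrier A"
    and cla: "\<And>x y. x\<in>carrier A \<Longrightarrow> y\<in>carrier A \<Longrightarrow> x \<oplus>\<^bsub>A\<^esub> y \<in> carrier A"
    and clm: "\<And>x y. x\<in>carrier A \<Longrightarrow> y\<in>carrier A \<Longrightarrow> x \<otimes>\<^bsub>A\<^esub> y \<in> carrier A"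
    and cln: "\<And>x. x\<in>carrier A \<Longrightarrow> neg A x \<in> carrier A"
    using isa unfolding is_icalg_def by auto
  have h0: "\<And>i. i\<in>I \<Longrightarrow> h \<zero>\<^bsub>A\<^esub> i = \<zero>\<^bsub>F i\<^esub>"
   and h1: "\<And>i. i\<in>I \<Longrightarrow> h \<one>\<^bsub>A\<^esub> i = \<one>\<^bsub>F i\<^esub>"
   and hadd: "\<And>x y i. x\<in>carrier A \<Longrightarrow> y\<in>carrier A \<Longrightarrow> i\<in>I \<Longrightarrow> h (x \<oplus>\<^bsub>A\<^esub> y) i = h x i \<oplus>\<^bsub>F i\<^esub> h y i"
   and hmul: "\<And>x y i. x\<in>carrier A \<Longrightarrow> y\<in>carrier A \<Longrightarrow> i\<in>I \<Longrightarrow> h (x \<otimes>\<^bsub>A\<^esub> y) i = h x i \<otimes>\<^bsub>F i\<^esub> h y i"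
   and hneg: "\<And>x i. x\<in>carrier A \<Longrightarrow> i\<in>I \<Longrightarrow> h (neg A x) i = neg (F i) (h x i)"
    using E by auto
  have negex: "\<And>x. x \<in> carrier A \<Longrightarrow> \<exists>y\<in>carrier A. x \<oplus>\<^bsub>A\<^esub> y = \<zero>\<^bsub>A\<^esub>"
  proof -
    fix x assume x: "x \<in> carrier A"
    have "x \<oplus>\<^bsub>A\<^esub> neg A x = \<zero>\<^bsub>A\<^esub>"
    proof (rule inj)
      fix i assume i: "i \<in> I"
      show "h (x \<oplus>\<^bsub>A\<^esub> neg A x) i = h \<zero>\<^bsub>A\<^esub> i"
        using x i hadd cln hneg Fneg hc h0 Fc cring.cring_simprules(17) by fastforce
    qed (use x cln cla z in auto)
    then show "\<exists>y\<in>carrier A. x \<oplus>\<^bsub>A\<^esub> y = \<zero>\<^bsub>A\<^esub>" using x cln by blast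
  qed
  have cr: "cring (reduct A)"
    by (rule pullback_cring[where G=F and I=I and h=h])
       (simp_all add: rc rm ro rz ra Fc hc inj z o cla clm h0 h1 hadd hmul negex)
  have hpow: "\<And>x i n. x\<in>carrier A \<Longrightarrow> i\<in>I \<Longrightarrow>
     x [^]\<^bsub>reduct A\<^esub> (n::nat) \<in> carrier A \<and> h (x [^]\<^bsub>reduct A\<^esub> n) i = h x i [^]\<^bsub>F i\<^esub> n"
  proof -
    fix x i n assume x: "x\<in>carrier A" and i: "i\<in>I"
    show "x [^]\<^bsub>reduct A\<^esub> (n::nat) \<in> carrier A \<and> h (x [^]\<^bsub>reduct A\<^esub> n) i = h x i [^]\<^bsub>F i\<^esub> n"
      by (induction n) (simp_all add: rm ro o h1 i x clm hmul)
  qed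
  have red: "reduced_ring (reduct A)"
    unfolding reduced_ring_def rc rz
  proof (intro ballI allI impI)
    fix a n assume a: "a \<in> carrier A" and an: "a [^]\<^bsub>reduct A\<^esub> (n::nat) = \<zero>\<^bsub>A\<^esub>"
    show "a = \<zero>\<^bsub>A\<^esub>"
    proof (rule inj)
      fix i assume i: "i \<in> I"
      have "h a i [^]\<^bsub>F i\<^esub> n = \<zero>\<^bsub>F i\<^esub>" using hpow[OF a i, of n] an h0 i by simp
      then show "h a i = h \<zero>\<^bsub>A\<^esub> i" using field_pow_zero[OF Ff[OF i] hc[OF a i]] h0 i by simp
    qed (use a z in auto)
  qed
  show ?thesis using cr red by blast
qed

lemma (in ring) ideal_chain_Union:
  assumes "C \<noteq> {}" "\<And>J. J \<in> C \<Longrightarrow> ideal J R" "\<forall>A\<in>C. \<forall>B\<in>C. A \<subseteq> B \<or> B \<subseteq> A"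
  shows "ideal (\<Union>C) R"
proof (rule idealI)
  show "ring R" by (rule ring_axioms)
  have ch: "\<And>J1 J2. J1 \<in> C \<Longrightarrow> J2 \<in> C \<Longrightarrow> J1 \<subseteq> J2 \<or> J2 \<subseteq> J1"
    using assms(3) by blast
  have AS: "\<And>J. J \<in> C \<Longrightarrow> additive_subgroup J R" using assms(2) ideal.axioms(1) by blast
  show "subgroup (\<Union> C) (add_monoid R)"
  proof (rule subgroup.intro)
    show "\<Union> C \<subseteq> carrier (add_monoid R)"
    proof
      fix x assume "x \<in> \<Union> C"
      then obtain J where "J \<in> C" "x \<in> J" by blast
      then show "x \<in> carrier (add_monoid R)" using ideal.Icarr[OF assms(2)] by auto
    qed
  next
    fix x y assume "x \<in> \<Union> C" "y \<in> \<Union> C"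
    then obtain J1 J2 where "J1 \<in> C" "J2 \<in> C" "x \<in> J1" "y \<in> J2" by blast
    then obtain J where J: "J \<in> C" "x \<in> J" "y \<in> J" using ch by blast
    then have "x \<oplus> y \<in> J" using additive_subgroup.a_closed[OF AS[OF J(1)]] by blast
    then show "x \<otimes>\<^bsub>add_monoid R\<^esub> y \<in> \<Union> C" using J(1) by auto
  next
    obtain J where J: "J \<in> C" using assms(1) by blast
    have "\<zero> \<in> J" using additive_subgroup.zero_closed[OF AS[OF J]] .
    then show "\<one>\<^bsub>add_monoid R\<^esub> \<in> \<Union> C" using J by auto
  next
    fix x assume "x \<in> \<Union> C"
    then obtain J where J: "J \<in> C" "x \<in> J" by blast
    have "\<ominus> x \<in> J" using additive_subgroup.a_inv_closed[OF AS[OF J(1)] J(2)] .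
    then show "inv\<^bsub>add_monoid R\<^esub> x \<in> \<Union> C" using J(1) unfolding a_inv_def by auto
  qed
next
  fix a x assume "a \<in> \<Union> C" "x \<in> carrier R"
  then obtain J where J: "J \<in> C" "a \<in> J" by blast
  then have "x \<otimes> a \<in> J" using ideal.I_l_closed[OF assms(2)[OF J(1)] J(2) \<open>x \<in> carrier R\<close>] by blast
  then show "x \<otimes> a \<in> \<Union> C" using J by blast
next
  fix a x assume "a \<in> \<Union> C" "x \<in> carrier R"
  then obtain J where J: "J \<in> C" "a \<in> J" by blast
  then have "a \<otimes> x \<in> J" using ideal.I_r_closed[OF assms(2)[OF J(1)] J(2) \<open>x \<in> carrier R\<close>] by blast
  then show "a \<otimes> x \<in> \<Union> C" using J by blast
qed

lemma (in ring) ideal_zorn: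
  assumes "ideal I R" "I \<inter> S = {}"
  shows "\<exists>P. ideal P R \<and> I \<subseteq> P \<and> P \<inter> S = {} \<and>
            (\<forall>J. ideal J R \<and> P \<subseteq> J \<and> J \<inter> S = {} \<longrightarrow> J = P)"
proof -
  define A where "A = {J. ideal J R \<and> I \<subseteq> J \<and> J \<inter> S = {}}"
  have IA: "I \<in> A" using assms unfolding A_def by blast
  have "\<exists>M\<in>A. \<forall>Y\<in>A. M \<subseteq> Y \<longrightarrow> Y = M"
  proof (rule Zorn_Lemma2, intro ballI)
    fix C assume C: "C \<in> chains A"
    show "\<exists>U\<in>A. \<forall>Y\<in>C. Y \<subseteq> U"
    proof (cases "C = {}")
      case True then show ?thesis using IA by (intro bexI[of _ I]) auto
    next
      case False
      have sub: "C \<subseteq> A" and ch: "\<forall>A\<in>C. \<forall>B\<in>C. A \<subseteq> B \<or> B \<subseteq> A"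
        using C unfolding chains_def chain_subset_def by auto
      have "\<And>J. J \<in> C \<Longrightarrow> ideal J R" using sub unfolding A_def by auto
      then have "ideal (\<Union>C) R" using ideal_chain_Union[OF False _ ch] by blast
      moreover have "I \<subseteq> \<Union>C" using False sub unfolding A_def by auto
      moreover have "\<Union>C \<inter> S = {}" using sub unfolding A_def by auto
      ultimately have "\<Union>C \<in> A" unfolding A_def by simp
      then show ?thesis by (intro bexI[of _ "\<Union>C"]) auto
    qed
  qed
  then obtain M where M: "M \<in> A" "\<And>Y. Y \<in> A \<Longrightarrow> M \<subseteq> Y \<Longrightarrow> Y = M" by blast
  show ?thesis
  proof (intro exI[of _ M] conjI allI impI)
    show "ideal M R" "I \<subseteq> M" "M \<inter> S = {}" using M(1) unfolding A_def by auto
  next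
    fix J assume "ideal J R \<and> M \<subseteq> J \<and> J \<inter> S = {}"
    moreover have "I \<subseteq> M" using M(1) unfolding A_def by auto
    ultimately have "J \<in> A" "M \<subseteq> J" unfolding A_def by auto
    then show "J = M" using M(2) by blast
  qed
qed

lemma (in cring) max_disjoint_prime:
  assumes a: "a \<in> carrier R" and P: "ideal P R" and disj: "\<And>n::nat. a [^] n \<notin> P"
    and max: "\<And>J. ideal J R \<Longrightarrow> P \<subseteq> J \<Longrightarrow> (\<forall>n::nat. a [^] n \<notin> J) \<Longrightarrow> J = P"
  shows "primeideal P R"
proof (rule primeidealI[OF P is_cring])
  have "\<one> \<notin> P" using disj[of 0] by simp
  then show "carrier R \<noteq> P" using one_closed by blast
next
  fix x y assume x: "x \<in> carrier R" and y: "y \<in> carrier R" and xy: "x \<otimes> y \<in> P"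
  interpret P: ideal P R by fact
  have aux: "\<And>z. z \<in> carrier R \<Longrightarrow> z \<notin> P \<Longrightarrow> \<exists>n::nat. \<exists>p\<in>P. \<exists>r\<in>carrier R. a [^] n = p \<oplus> r \<otimes> z"
  proof -
    fix z assume z: "z \<in> carrier R" "z \<notin> P"
    let ?J = "P <+>\<^bsub>R\<^esub> PIdl z"
    have J: "ideal ?J R" using add_ideals[OF P cgenideal_ideal[OF z(1)]] .
    have PJ: "P \<subseteq> ?J"
    proof
      fix p assume p: "p \<in> P"
      have "\<zero> \<otimes> z \<in> PIdl z" unfolding cgenideal_def using z(1) by blast
      then have "\<zero> \<in> PIdl z" using z(1) by simp
      then have "p \<oplus> \<zero> \<in> ?J" unfolding set_add_def' using p by blast
      then show "p \<in> ?J" using p P.Icarr by simp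
    qed
    have "z \<in> ?J"
    proof -
      have "z \<in> PIdl z" using cgenideal_self z(1) by blast
      moreover have "\<zero> \<in> P" using additive_subgroup.zero_closed[OF P.additive_subgroup_axioms] .
      ultimately have "\<zero> \<oplus> z \<in> ?J" unfolding set_add_def' by blast
      then show ?thesis using z by simp
    qed
    then have "?J \<noteq> P" using z by blast
    then obtain n::nat where "a [^] n \<in> ?J" using max[OF J PJ] by blast
    then obtain p q where "p \<in> P" "q \<in> PIdl z" "a [^] n = p \<oplus> q" unfolding set_add_def' by blast
    then show "\<exists>n::nat. \<exists>p\<in>P. \<exists>r\<in>carrier R. a [^] n = p \<oplus> r \<otimes> z"
      unfolding cgenideal_def by blast
  qed
  show "x \<in> P \<or> y \<in> P"
  proof (rule ccontr)
    assume "\<not> (x \<in> P \<or> y \<in> P)"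
    then have nx: "x \<notin> P" and ny: "y \<notin> P" by auto
    obtain m :: nat and p1 r1 where h1: "p1 \<in> P" "r1 \<in> carrier R" "a [^] m = p1 \<oplus> r1 \<otimes> x"
      using aux[OF x nx] by blast
    obtain n :: nat and p2 r2 where h2: "p2 \<in> P" "r2 \<in> carrier R" "a [^] n = p2 \<oplus> r2 \<otimes> y"
      using aux[OF y ny] by blast
    note h = h1(1) h2(1) h1(2) h2(2) h1(3) h2(3)
    have c: "p1 \<in> carrier R" "p2 \<in> carrier R" using h P.Icarr by auto
    have e1: "a [^] (m + n) = a [^] m \<otimes> a [^] n" using a by (simp add: nat_pow_mult)
    have e2: "a [^] m \<otimes> a [^] n = (p1 \<oplus> r1 \<otimes> x) \<otimes> (p2 \<oplus> r2 \<otimes> y)"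
      by (simp only: h(5) h(6))
    have e3: "(p1 \<oplus> r1 \<otimes> x) \<otimes> (p2 \<oplus> r2 \<otimes> y) =
       p1 \<otimes> (p2 \<oplus> r2 \<otimes> y) \<oplus> ((r1 \<otimes> x) \<otimes> p2 \<oplus> (r1 \<otimes> x) \<otimes> (r2 \<otimes> y))"
      using h c x y by (simp add: l_distr r_distr a_ac)
    have e4: "(r1 \<otimes> x) \<otimes> (r2 \<otimes> y) = (r1 \<otimes> r2) \<otimes> (x \<otimes> y)"
      using h c x y by (simp add: m_ac)
    have m1: "p1 \<otimes> (p2 \<oplus> r2 \<otimes> y) \<in> P" using h c y by (simp add: P.I_r_closed)
    have m2: "(r1 \<otimes> x) \<otimes> p2 \<in> P" using h c x by (simp add: P.I_l_closed)
    have m3: "(r1 \<otimes> r2) \<otimes> (x \<otimes> y) \<in> P" using h xy by (simp add: P.I_l_closed)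
    have "a [^] (m + n) \<in> P"
      unfolding e1 e2 e3 e4 using m1 m2 m3 by (simp add: P.a_closed)
    then show False using disj by blast
  qed
qed

lemma (in ideal) rep_coset:
  assumes "C \<in> a_rcosets I"
  shows "(SOME x. x \<in> C) \<in> C" "(SOME x. x \<in> C) \<in> carrier R"
proof -
  obtain c where c: "c \<in> carrier R" "C = I +> c" using assms unfolding A_RCOSETS_def' by blast
  then have "c \<in> C" using a_rcos_self by blast
  then show "(SOME x. x \<in> C) \<in> C" by (rule someI)
  then show "(SOME x. x \<in> C) \<in> carrier R" using c a_elemrcos_carrier by blast
qed

lemma (in ideal) rep_inj: "inj_on (\<lambda>C. SOME x. x \<in> C) (a_rcosets I)"
proof (rule inj_onI)
  fix C1 C2 assume C1: "C1 \<in> a_rcosets I" and C2: "C2 \<in> a_rcosets I"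
    and eq: "(SOME x. x \<in> C1) = (SOME x. x \<in> C2)"
  obtain c1 where c1: "c1 \<in> carrier R" "C1 = I +> c1" using C1 unfolding A_RCOSETS_def' by blast
  obtain c2 where c2: "c2 \<in> carrier R" "C2 = I +> c2" using C2 unfolding A_RCOSETS_def' by blast
  let ?r = "SOME x. x \<in> C1"
  have r1: "?r \<in> I +> c1" using rep_coset(1)[OF C1] c1 by simp
  have r2: "?r \<in> I +> c2" using rep_coset(1)[OF C2] c2 eq by simp
  have "I +> c1 = I +> ?r" using a_repr_independence'[OF r1 c1(1)] .
  moreover have "I +> c2 = I +> ?r" using a_repr_independence'[OF r2 c2(1)] .
  ultimately show "C1 = C2" using c1 c2 by simp
qed

lemma (in domain) poly_eq_aux: "b \<in> carrier R \<Longrightarrow> b \<noteq> \<zero> \<Longrightarrow> poly_mult [b] [\<one>, \<zero>] = poly_add [b, \<ominus>\<one>] [\<one>]"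
  by (simp add: l_neg)

lemma reduced_field_hom:
  fixes R :: "('b, 'm) ring_scheme"
  assumes cR: "cring R" and red: "reduced_ring R" and a: "a \<in> carrier R" and a0: "a \<noteq> \<zero>\<^bsub>R\<^esub>"
  shows "\<exists>(K :: 'b set list set ring) \<phi> (e :: 'b set list set \<Rightarrow> 'b list).
     field K \<and> \<phi> \<in> ring_hom R K \<and> \<phi> a \<noteq> \<zero>\<^bsub>K\<^esub> \<and> inj_on e (carrier K)"
proof -
  interpret R: cring R by fact
  define S where "S = range (\<lambda>n::nat. a [^]\<^bsub>R\<^esub> n)"
  have dis0: "{\<zero>\<^bsub>R\<^esub>} \<inter> S = {}"
  proof (rule ccontr)
    assume "{\<zero>\<^bsub>R\<^esub>} \<inter> S \<noteq> {}"
    then have "\<zero>\<^bsub>R\<^esub> \<in> S" by blast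
    then obtain n :: nat where "\<zero>\<^bsub>R\<^esub> = a [^]\<^bsub>R\<^esub> n" unfolding S_def by blast
    then have an: "a [^]\<^bsub>R\<^esub> n = \<zero>\<^bsub>R\<^esub>" by simp
    have "\<forall>n::nat. a [^]\<^bsub>R\<^esub> n = \<zero>\<^bsub>R\<^esub> \<longrightarrow> a = \<zero>\<^bsub>R\<^esub>"
      using red a unfolding reduced_ring_def by blast
    then have "a = \<zero>\<^bsub>R\<^esub>" using an by blast
    then show False using a0 by simp
  qed
  have "\<exists>P. ideal P R \<and> {\<zero>\<^bsub>R\<^esub>} \<subseteq> P \<and> P \<inter> S = {} \<and>
            (\<forall>J. ideal J R \<and> P \<subseteq> J \<and> J \<inter> S = {} \<longrightarrow> J = P)"
    by (rule R.ideal_zorn[OF R.zeroideal dis0])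
  then obtain P where P: "ideal P R" "P \<inter> S = {}"
    and Pmax: "\<forall>J. ideal J R \<and> P \<subseteq> J \<and> J \<inter> S = {} \<longrightarrow> J = P"
    by blast
  have disj: "\<And>n::nat. a [^]\<^bsub>R\<^esub> n \<notin> P" using P(2) unfolding S_def by blast
  have pP: "primeideal P R"
  proof (rule R.max_disjoint_prime[OF a P(1) disj])
    fix J assume "ideal J R" "P \<subseteq> J" "\<forall>n::nat. a [^]\<^bsub>R\<^esub> n \<notin> J"
    then have "J \<inter> S = {}" unfolding S_def by blast
    then show "J = P" using Pmax \<open>ideal J R\<close> \<open>P \<subseteq> J\<close> by blast
  qed
  interpret P: primeideal P R by fact
  define D where "D = R Quot P"
  have dD: "domain D" unfolding D_def by (rule P.quotient_is_domain)
  interpret D: domain D by fact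
  have piH: "(+>\<^bsub>R\<^esub>) P \<in> ring_hom R D" unfolding D_def by (rule P.rcos_ring_hom)
  define ab where "ab = P +>\<^bsub>R\<^esub> a"
  have abc: "ab \<in> carrier D" using ring_hom_memE(1)[OF piH a] unfolding ab_def .
  have ab0: "ab \<noteq> \<zero>\<^bsub>D\<^esub>"
  proof
    assume "ab = \<zero>\<^bsub>D\<^esub>"
    then have "P +>\<^bsub>R\<^esub> a = P" unfolding ab_def D_def FactRing_def by simp
    moreover have "a \<in> P +>\<^bsub>R\<^esub> a" using P.a_rcos_self[OF a] .
    ultimately have "a \<in> P" by simp
    then show False using disj[of 1] a by simp
  qed
  define U where "U = poly_ring D"
  have dU: "domain U" unfolding U_def by (rule D.univ_poly_is_domain[OF D.carrier_is_subring])
  interpret U: domain U by fact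
  define q where "q = [ab, \<ominus>\<^bsub>D\<^esub> \<one>\<^bsub>D\<^esub>]"
  have qc: "q \<in> carrier U"
    unfolding U_def sym[OF univ_poly_carrier] polynomial_def q_def using abc ab0 by auto
  have qnu: "q \<notin> Units U"
    using D.univ_poly_carrier_units_incl unfolding U_def q_def by auto
  define I0 where "I0 = PIdl\<^bsub>U\<^esub> q"
  have I0: "ideal I0 U" unfolding I0_def by (rule U.cgenideal_ideal[OF qc])
  have qI0: "q \<in> I0" unfolding I0_def by (rule U.cgenideal_self[OF qc])
  have oI0: "I0 \<inter> {\<one>\<^bsub>U\<^esub>} = {}"
  proof (rule ccontr)
    assume "I0 \<inter> {\<one>\<^bsub>U\<^esub>} \<noteq> {}"
    then obtain x where x: "x \<in> carrier U" "\<one>\<^bsub>U\<^esub> = x \<otimes>\<^bsub>U\<^esub> q" unfolding I0_def cgenideal_def by auto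
    then have "q \<in> Units U" unfolding Units_def using qc U.m_comm by auto
    then show False using qnu by simp
  qed
  obtain M where M: "ideal M U" "I0 \<subseteq> M" "M \<inter> {\<one>\<^bsub>U\<^esub>} = {}"
    and Mmax: "\<forall>J. ideal J U \<and> M \<subseteq> J \<and> J \<inter> {\<one>\<^bsub>U\<^esub>} = {} \<longrightarrow> J = M"
    using U.ideal_zorn[OF I0 oI0] by blast
  have mM: "maximalideal M U"
  proof (rule maximalidealI[OF M(1)])
    show "carrier U \<noteq> M" using M(3) U.one_closed by blast
  next
    fix J assume J: "ideal J U" "M \<subseteq> J" "J \<subseteq> carrier U"
    show "J = M \<or> J = carrier U"
    proof (cases "\<one>\<^bsub>U\<^esub> \<in> J")
      case True then show ?thesis using ideal.one_imp_carrier[OF J(1)] by blast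
    next
      case False then show ?thesis using Mmax J by blast
    qed
  qed
  interpret M: maximalideal M U by fact
  define K where "K = U Quot M"
  have fK: "field K" unfolding K_def by (rule M.quotient_is_field[OF U.is_cring])
  interpret K: field K by fact
  have muH: "(+>\<^bsub>U\<^esub>) M \<in> ring_hom U K" unfolding K_def by (rule M.rcos_ring_hom)
  have pcH: "D.poly_of_const \<in> ring_hom D U"
    using D.canonical_embedding_is_hom[OF D.carrier_is_subring] unfolding U_def by simp
  define \<phi> where "\<phi> = (+>\<^bsub>U\<^esub>) M \<circ> D.poly_of_const \<circ> (+>\<^bsub>R\<^esub>) P"
  have phiH: "\<phi> \<in> ring_hom R K" unfolding \<phi>_def
    using ring_hom_trans[OF ring_hom_trans[OF piH pcH] muH] by (simp add: comp_assoc)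
  have pab: "D.poly_of_const ab = [ab]" unfolding D.poly_of_const_def using ab0 by simp
  have phia: "\<phi> a = M +>\<^bsub>U\<^esub> [ab]" unfolding \<phi>_def using pab by (simp add: ab_def)
  have Xc: "X\<^bsub>D\<^esub> \<in> carrier U" unfolding U_def by (rule D.var_closed(1)[OF D.carrier_is_subring])
  have abU: "[ab] \<in> carrier U" using pab ring_hom_memE(1)[OF pcH abc] by simp
  have eq: "[ab] \<otimes>\<^bsub>U\<^esub> X\<^bsub>D\<^esub> = q \<oplus>\<^bsub>U\<^esub> \<one>\<^bsub>U\<^esub>"
    unfolding U_def q_def var_def univ_poly_mult univ_poly_add univ_poly_one
    using D.poly_eq_aux[OF abc ab0] by simp
  have "\<phi> a \<otimes>\<^bsub>K\<^esub> (M +>\<^bsub>U\<^esub> X\<^bsub>D\<^esub>) = \<one>\<^bsub>K\<^esub>"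
  proof -
    have "\<phi> a \<otimes>\<^bsub>K\<^esub> (M +>\<^bsub>U\<^esub> X\<^bsub>D\<^esub>) = M +>\<^bsub>U\<^esub> ([ab] \<otimes>\<^bsub>U\<^esub> X\<^bsub>D\<^esub>)"
      unfolding phia using ring_hom_memE(2)[OF muH abU Xc] by simp
    also have "\<dots> = (M +>\<^bsub>U\<^esub> q) \<oplus>\<^bsub>K\<^esub> (M +>\<^bsub>U\<^esub> \<one>\<^bsub>U\<^esub>)"
      unfolding eq using ring_hom_memE(3)[OF muH qc U.one_closed] by simp
    also have "M +>\<^bsub>U\<^esub> q = \<zero>\<^bsub>K\<^esub>"
      using M.a_rcos_const qI0 M(2) unfolding K_def FactRing_def by auto
    also have "M +>\<^bsub>U\<^esub> \<one>\<^bsub>U\<^esub> = \<one>\<^bsub>K\<^esub>" using ring_hom_memE(4)[OF muH] by simp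
    finally show ?thesis by simp
  qed
  then have phia0: "\<phi> a \<noteq> \<zero>\<^bsub>K\<^esub>"
    using K.one_not_zero ring_hom_memE(1)[OF muH Xc] K.l_null by force
  define rD where "rD = (\<lambda>C::'b set. SOME x. x \<in> C)"
  define rU where "rU = (\<lambda>C::'b set list set. SOME x. x \<in> C)"
  define e where "e = (\<lambda>C. map rD (rU C))"
  have cD: "carrier D = a_rcosets\<^bsub>R\<^esub> P" unfolding D_def FactRing_def by simp
  have cK: "carrier K = a_rcosets\<^bsub>U\<^esub> M" unfolding K_def FactRing_def by simp
  have rDinj: "inj_on rD (carrier D)" unfolding rD_def cD by (rule P.rep_inj)
  have rUinj: "inj_on rU (carrier K)" unfolding rU_def cK by (rule M.rep_inj)
  have rUc: "\<And>C. C \<in> carrier K \<Longrightarrow> rU C \<in> carrier U" unfolding rU_def cK using M.rep_coset(2) by blast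
  have setU: "\<And>p. p \<in> carrier U \<Longrightarrow> set p \<subseteq> carrier D"
    unfolding U_def sym[OF univ_poly_carrier] polynomial_def by auto
  have einj: "inj_on e (carrier K)"
  proof (rule inj_onI)
    fix C1 C2 assume C1: "C1 \<in> carrier K" and C2: "C2 \<in> carrier K" and eq: "e C1 = e C2"
    have "inj_on rD (set (rU C1) \<union> set (rU C2))"
      using rDinj setU[OF rUc[OF C1]] setU[OF rUc[OF C2]] by (meson inj_on_subset le_sup_iff)
    then have "rU C1 = rU C2" using eq unfolding e_def using inj_on_map_eq_map by blast
    then show "C1 = C2" using rUinj C1 C2 unfolding inj_on_def by blast
  qed
  show ?thesis using fK phiH phia0 einj by blast
qed

lemma add_pow_Suc': "add_pow R (Suc n) a = add_pow R n a \<oplus>\<^bsub>R\<^esub> a"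
  by (simp add: add_pow_def)
lemma add_pow_0': "add_pow R (0::nat) a = \<zero>\<^bsub>R\<^esub>"
  by (simp add: add_pow_def)

context ring begin
lemma add_pow_closed': "a \<in> carrier R \<Longrightarrow> add_pow R (n::nat) a \<in> carrier R"
  by (induction n) (simp_all add: add_pow_Suc' add_pow_0')
lemma add_pow_add': "a \<in> carrier R \<Longrightarrow> add_pow R (m + n::nat) a = add_pow R m a \<oplus> add_pow R n a"
proof (induction n)
  case 0 then show ?case by (simp add: add_pow_0' add_pow_closed')
next
  case (Suc n)
  have "add_pow R (m + Suc n) a = add_pow R (Suc (m + n)) a" by simp
  also have "\<dots> = add_pow R (m + n) a \<oplus> a" by (rule add_pow_Suc')
  also have "\<dots> = add_pow R m a \<oplus> add_pow R n a \<oplus> a" using Suc by simp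
  also have "\<dots> = add_pow R m a \<oplus> add_pow R (Suc n) a"
    using Suc.prems by (simp add: add_pow_Suc' a_assoc add_pow_closed')
  finally show ?case .
qed
lemma add_pow_mult_one: "add_pow R (m*n::nat) \<one> = (add_pow R m \<one>) \<otimes> (add_pow R n \<one>)"
proof (induction m)
  case 0 then show ?case by (simp add: add_pow_0' add_pow_closed')
next
  case (Suc m)
  have "add_pow R (Suc m * n) \<one> = add_pow R (m*n + n) \<one>" by (simp add: add.commute)
  also have "\<dots> = add_pow R (m*n) \<one> \<oplus> add_pow R n \<one>" by (simp add: add_pow_add')
  also have "\<dots> = (add_pow R m \<one>) \<otimes> (add_pow R n \<one>) \<oplus> add_pow R n \<one>" using Suc by simp
  also have "\<dots> = (add_pow R (Suc m) \<one>) \<otimes> (add_pow R n \<one>)"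
    by (simp add: add_pow_Suc' l_distr add_pow_closed')
  finally show ?case .
qed
end

lemma field_char_prime:
  assumes "field F" "ring_char F \<noteq> 0"
  shows "Factorial_Ring.prime (ring_char F)"
proof -
  interpret field F by fact
  let ?P = "\<lambda>n::nat. n > 0 \<and> add_pow F n \<one>\<^bsub>F\<^esub> = \<zero>\<^bsub>F\<^esub>"
  have ex: "\<exists>n. ?P n"
  proof (rule ccontr)
    assume nex: "\<not> (\<exists>n. ?P n)"
    have "ring_char F = 0" unfolding ring_char_def using nex by (simp only: if_False)
    then show False using assms(2) by simp
  qed
  then have c: "ring_char F = (LEAST n. ?P n)" unfolding ring_char_def by simp
  have Pc: "?P (ring_char F)" unfolding c by (rule LeastI_ex[OF ex])
  have minc: "\<And>m. ?P m \<Longrightarrow> ring_char F \<le> m" unfolding c by (rule Least_le)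
  have "add_pow F (1::nat) \<one>\<^bsub>F\<^esub> = \<one>\<^bsub>F\<^esub>" by (simp add: add_pow_def)
  then have c1: "ring_char F \<noteq> 1" using Pc one_not_zero by auto
  show ?thesis unfolding prime_nat_iff
  proof (intro conjI allI impI)
    show "1 < ring_char F" using Pc c1 by linarith
  next
    fix m assume "m dvd ring_char F"
    then obtain k where k: "ring_char F = m * k" by blast
    have mk: "m > 0" "k > 0" using Pc k by auto
    have "add_pow F (m*k) \<one>\<^bsub>F\<^esub> = \<zero>\<^bsub>F\<^esub>" using Pc k by simp
    then have "(add_pow F m \<one>\<^bsub>F\<^esub>) \<otimes>\<^bsub>F\<^esub> (add_pow F k \<one>\<^bsub>F\<^esub>) = \<zero>\<^bsub>F\<^esub>"
      by (simp only: add_pow_mult_one)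
    then have "add_pow F m \<one>\<^bsub>F\<^esub> = \<zero>\<^bsub>F\<^esub> \<or> add_pow F k \<one>\<^bsub>F\<^esub> = \<zero>\<^bsub>F\<^esub>"
      using integral add_pow_closed' one_closed by blast
    then show "m = 1 \<or> m = ring_char F"
    proof
      assume "add_pow F m \<one>\<^bsub>F\<^esub> = \<zero>\<^bsub>F\<^esub>"
      then have "ring_char F \<le> m" using minc mk by blast
      then have "m * k \<le> m * 1" using k by simp
      then have "k \<le> 1" using mk by (simp add: mult_le_cancel1)
      then have "k = 1" using mk by simp
      then show ?thesis using k by simp
    next
      assume "add_pow F k \<one>\<^bsub>F\<^esub> = \<zero>\<^bsub>F\<^esub>"
      then have "ring_char F \<le> k" using minc mk by blast
      then have "m * k \<le> 1 * k" using k by simp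
      then have "m \<le> 1" using mk by (simp add: mult_le_cancel2)
      then show ?thesis using mk by simp
    qed
  qed
qed

lemma make_icf:
  fixes L :: "('a,'m) ring_scheme" and f :: "'a \<Rightarrow> 'c"
  assumes L: "field L" and inj: "inj_on f (carrier L)"
  and roots: "\<And>n a. n > 0 \<Longrightarrow> a \<in> carrier L \<Longrightarrow> \<exists>b\<in>carrier L. b [^]\<^bsub>L\<^esub> (n::nat) = a"
  shows "\<exists>F :: 'c icalg. implicitly_closed_field F \<and> f \<in> ring_hom L F"
proof -
  interpret L: field L by fact
  define g where "g = inv_into (carrier L) f"
  have gf: "\<And>x. x \<in> carrier L \<Longrightarrow> g (f x) = x" unfolding g_def using inj by (simp add: inv_into_f_f)
  define C where "C = f ` carrier L"
  define Mu where "Mu = (\<lambda>u v. f (g u \<otimes>\<^bsub>L\<^esub> g v))"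
  define Ad where "Ad = (\<lambda>u v. f (g u \<oplus>\<^bsub>L\<^esub> g v))"
  define On where "On = f \<one>\<^bsub>L\<^esub>"
  define Ze where "Ze = f \<zero>\<^bsub>L\<^esub>"
  define NG where "NG = (\<lambda>u. THE v. v \<in> C \<and> Ad u v = Ze \<and> Ad v u = Ze)"
  define WI where "WI = (\<lambda>u. if u = Ze then Ze else THE v. v \<in> C \<and> Mu u v = On \<and> Mu v u = On)"
  define WR where "WR = (\<lambda>p u. if ring_char L = p then f (SOME b. b \<in> carrier L \<and> b [^]\<^bsub>L\<^esub> (p::nat) = g u) else Ze)"
  define F :: "'c icalg" where "F = \<lparr>carrier = C, monoid.mult = Mu, one = On, ring.zero = Ze, ring.add = Ad,
      neg = NG, winv = WI, wroot = WR\<rparr>"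
  have Fc: "carrier F = C" and Fm: "\<And>u v. u \<otimes>\<^bsub>F\<^esub> v = Mu u v" and Fa: "\<And>u v. u \<oplus>\<^bsub>F\<^esub> v = Ad u v"
    and Fo: "\<one>\<^bsub>F\<^esub> = On" and Fz: "\<zero>\<^bsub>F\<^esub> = Ze" and Fn: "neg F = NG" and Fw: "winv F = WI"
    and Fr: "wroot F = WR"
    unfolding F_def by simp_all
  have fm: "\<And>x y. x \<in> carrier L \<Longrightarrow> y \<in> carrier L \<Longrightarrow> f (x \<otimes>\<^bsub>L\<^esub> y) = f x \<otimes>\<^bsub>F\<^esub> f y"
    by (simp add: Fm Mu_def gf)
  have fa: "\<And>x y. x \<in> carrier L \<Longrightarrow> y \<in> carrier L \<Longrightarrow> f (x \<oplus>\<^bsub>L\<^esub> y) = f x \<oplus>\<^bsub>F\<^esub> f y"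
    by (simp add: Fa Ad_def gf)
  have hom: "f \<in> ring_hom L F"
    by (rule ring_hom_memI) (simp_all add: Fc C_def fm fa Fo On_def)
  have iso: "f \<in> ring_iso L F"
    unfolding ring_iso_def using hom inj by (simp add: bij_betw_def Fc C_def)
  have "field (F\<lparr>zero := f \<zero>\<^bsub>L\<^esub>\<rparr>)" by (rule L.ring_iso_imp_img_field[OF iso])
  moreover have "F\<lparr>zero := f \<zero>\<^bsub>L\<^esub>\<rparr> = F" unfolding F_def Ze_def by simp
  ultimately have fF: "field F" by simp
  interpret F: field F by fact
  have fpow: "\<And>x n. x \<in> carrier L \<Longrightarrow> f (x [^]\<^bsub>L\<^esub> (n::nat)) = f x [^]\<^bsub>F\<^esub> n"
  proof -
    fix x n assume x: "x \<in> carrier L"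
    show "f (x [^]\<^bsub>L\<^esub> (n::nat)) = f x [^]\<^bsub>F\<^esub> n"
      by (induction n) (simp_all add: x fm Fo On_def)
  qed
  have fapow: "\<And>n. f (add_pow L (n::nat) \<one>\<^bsub>L\<^esub>) = add_pow F n \<one>\<^bsub>F\<^esub>"
  proof -
    fix n show "f (add_pow L (n::nat) \<one>\<^bsub>L\<^esub>) = add_pow F n \<one>\<^bsub>F\<^esub>"
      by (induction n) (simp_all add: add_pow_Suc' add_pow_0' fa L.add_pow_closed' Fo On_def Fz Ze_def)
  qed
  have apeq: "\<And>n. (add_pow F (n::nat) \<one>\<^bsub>F\<^esub> = \<zero>\<^bsub>F\<^esub>) = (add_pow L n \<one>\<^bsub>L\<^esub> = \<zero>\<^bsub>L\<^esub>)"
  proof -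
    fix n
    have "(add_pow F (n::nat) \<one>\<^bsub>F\<^esub> = \<zero>\<^bsub>F\<^esub>) = (f (add_pow L n \<one>\<^bsub>L\<^esub>) = f \<zero>\<^bsub>L\<^esub>)"
      by (simp add: fapow Fz Ze_def)
    also have "\<dots> = (add_pow L n \<one>\<^bsub>L\<^esub> = \<zero>\<^bsub>L\<^esub>)"
      by (rule inj_on_eq_iff[OF inj L.add_pow_closed'[OF L.one_closed] L.zero_closed])
    finally show "(add_pow F (n::nat) \<one>\<^bsub>F\<^esub> = \<zero>\<^bsub>F\<^esub>) = (add_pow L n \<one>\<^bsub>L\<^esub> = \<zero>\<^bsub>L\<^esub>)" .
  qed
  have chareq: "ring_char F = ring_char L" unfolding ring_char_def apeq ..
  have Froots: "\<And>n a. n > 0 \<Longrightarrow> a \<in> carrier F \<Longrightarrow> \<exists>b\<in>carrier F. b [^]\<^bsub>F\<^esub> (n::nat) = a"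
  proof -
    fix n :: nat and a assume n: "n > 0" and a: "a \<in> carrier F"
    then obtain x where x: "x \<in> carrier L" "a = f x" by (auto simp: Fc C_def)
    obtain b where b: "b \<in> carrier L" "b [^]\<^bsub>L\<^esub> n = x" using roots[OF n x(1)] by blast
    have "f b [^]\<^bsub>F\<^esub> n = a" using fpow[OF b(1), of n] b(2) x(2) by simp
    moreover have "f b \<in> carrier F" using b(1) by (simp add: Fc C_def)
    ultimately show "\<exists>b\<in>carrier F. b [^]\<^bsub>F\<^esub> (n::nat) = a" by blast
  qed
  have wr: "weakly_rooted F"
    unfolding weakly_rooted_def
  proof (intro conjI fF)
    show "ring_char F = 0 \<or> Factorial_Ring.prime (ring_char F) \<and>
        (\<forall>a\<in>carrier F. \<exists>b\<in>carrier F. b [^]\<^bsub>F\<^esub> ring_char F = a)"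
    proof (cases "ring_char F = 0")
      case False
      then show ?thesis using field_char_prime[OF fF False] Froots by blast
    qed simp
  qed
  have negF: "\<forall>a\<in>carrier F. neg F a = \<ominus>\<^bsub>F\<^esub> a"
    by (simp add: a_inv_def m_inv_def Fn NG_def F_def)
  have winvF: "\<forall>a\<in>carrier F. a \<noteq> \<zero>\<^bsub>F\<^esub> \<longrightarrow> winv F a = inv\<^bsub>F\<^esub> a"
    by (simp add: m_inv_def Fw WI_def F_def)
  have winv0: "winv F \<zero>\<^bsub>F\<^esub> = \<zero>\<^bsub>F\<^esub>" by (simp add: Fw WI_def Fz)
  have wrF: "\<forall>p. Factorial_Ring.prime (p::nat) \<longrightarrow> (\<forall>a\<in>carrier F.
        (if ring_char F = p
         then wroot F p a \<in> carrier F \<and> wroot F p a [^]\<^bsub>F\<^esub> p = a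
         else wroot F p a = \<zero>\<^bsub>F\<^esub>))"
  proof (intro allI impI ballI)
    fix p :: nat and a assume p: "Factorial_Ring.prime p" and a: "a \<in> carrier F"
    show "if ring_char F = p
         then wroot F p a \<in> carrier F \<and> wroot F p a [^]\<^bsub>F\<^esub> p = a
         else wroot F p a = \<zero>\<^bsub>F\<^esub>"
    proof (cases "ring_char F = p")
      case True
      have p0: "p > 0" using p prime_gt_0_nat by blast
      have ga: "g a \<in> carrier L" using a unfolding Fc C_def g_def by (simp add: inv_into_into)
      have fga: "f (g a) = a" using a unfolding Fc C_def g_def by (simp add: f_inv_into_f)
      have "\<exists>b. b \<in> carrier L \<and> b [^]\<^bsub>L\<^esub> p = g a" using roots[OF p0 ga] by blast
      then have sb: "(SOME b. b \<in> carrier L \<and> b [^]\<^bsub>L\<^esub> p = g a) \<in> carrier L \<and>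
          (SOME b. b \<in> carrier L \<and> b [^]\<^bsub>L\<^esub> p = g a) [^]\<^bsub>L\<^esub> p = g a" by (rule someI_ex)
      have w: "wroot F p a = f (SOME b. b \<in> carrier L \<and> b [^]\<^bsub>L\<^esub> p = g a)"
        using True chareq by (simp add: Fr WR_def)
      define b where "b = (SOME b. b \<in> carrier L \<and> b [^]\<^bsub>L\<^esub> p = g a)"
      have "f b [^]\<^bsub>F\<^esub> p = a" using fpow[of b p] sb fga unfolding b_def by simp
      then show ?thesis using True w sb unfolding b_def[symmetric] by (simp add: Fc C_def)
    next
      case False
      then show ?thesis using chareq by (simp add: Fr WR_def Fz)
    qed
  qed
  have "implicitly_closed_field F"
    unfolding implicitly_closed_field_def using wr negF winvF winv0 wrF by blast
  then show ?thesis using hom by blast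
qed

lemma (in field) alg_closed_roots:
  assumes "algebraically_closed R" "n > 0" "a \<in> carrier R"
  shows "\<exists>b\<in>carrier R. b [^] (n::nat) = a"
proof -
  define p where "p = monom \<one> (n - 1) @ [\<ominus> a]"
  have setp: "set p \<subseteq> carrier R" unfolding p_def using assms(3) monom_in_carrier by auto
  have lp: "length p = n + 1" unfolding p_def monom_def using assms(2) by simp
  have hd: "hd p = \<one>" unfolding p_def monom_def by simp
  have pc: "p \<in> carrier (poly_ring R)"
    unfolding sym[OF univ_poly_carrier] polynomial_def using setp hd lp by auto
  have "splitted p" using algebraically_closed.roots_over_carrier[OF assms(1) pc] .
  then have "size (roots p) = n" unfolding splitted_def using lp by simp
  then have "roots p \<noteq> {#}" using assms(2) by auto
  then obtain b where "b \<in># roots p" by blast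
  then have "is_root p b" using roots_mem_iff_is_root[OF pc] by blast
  then have b: "b \<in> carrier R" "eval p b = \<zero>" unfolding is_root_def by auto
  have "eval p b = eval (monom \<one> (n - 1)) b \<otimes> b [^] (1::nat) \<oplus> eval [\<ominus> a] b"
    unfolding p_def using eval_append[OF monom_in_carrier _ b(1), of \<one> "[\<ominus> a]"] assms(3) by simp
  also have "\<dots> = b [^] n \<oplus> \<ominus> a"
  proof -
    have "eval (monom \<one> (n - 1)) b \<otimes> b [^] (1::nat) = b [^] (n - 1) \<otimes> b"
      using eval_monom[OF one_closed b(1)] b(1) by simp
    also have "\<dots> = b [^] n" using assms(2) b(1) by (metis Suc_diff_1 nat_pow_Suc)
    finally show ?thesis using assms(3) b(1) by simp
  qed
  finally have "b [^] n \<oplus> \<ominus> a = \<zero>" using b(2) by simp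
  then have "b [^] n = a" using assms(3) b(1) by (metis add.inv_closed minus_equality nat_pow_closed add.inv_inv)
  then show ?thesis using b(1) by blast
qed

definition pr_enc :: "nat \<times> 'b list \<Rightarrow> 'b list" where
  "pr_enc = (\<lambda>(i, l). l @ replicate (prod_encode (i, length l) - length l) undefined)"

lemma pr_enc_length: "length (pr_enc (i, l)) = prod_encode (i, length l)"
  unfolding pr_enc_def using le_prod_encode_2[of "length l" i] by simp

lemma pr_enc_inj: "pr_enc (i, l) = pr_enc (j, m) \<Longrightarrow> i = j \<and> l = m"
proof -
  assume e: "pr_enc (i, l) = pr_enc (j, m)"
  then have "prod_encode (i, length l) = prod_encode (j, length m)"
    using pr_enc_length by metis
  then have ij: "i = j" and lm: "length l = length m"
    using inj_prod_encode[of UNIV] unfolding inj_on_def by blast+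
  have "take (length l) (pr_enc (i, l)) = l" unfolding pr_enc_def by simp
  moreover have "take (length m) (pr_enc (j, m)) = m" unfolding pr_enc_def by simp
  ultimately have "l = m" using e lm by metis
  then show ?thesis using ij by simp
qed

definition pair_enc :: "'b list \<times> 'b list \<Rightarrow> 'b list" where
  "pair_enc = (\<lambda>(l, m). pr_enc (length l, l @ m))"

lemma pair_enc_inj: "pair_enc (l, m) = pair_enc (l', m') \<Longrightarrow> l = l' \<and> m = m'"
  unfolding pair_enc_def by (auto dest!: pr_enc_inj)

fun lists_enc :: "'b list list \<Rightarrow> 'b list" where
  "lists_enc [] = pr_enc (0, [])"
| "lists_enc (l # ls) = pr_enc (1, pair_enc (l, lists_enc ls))"

lemma lists_enc_inj: "lists_enc ls = lists_enc ms \<Longrightarrow> ls = ms"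
proof (induction ls arbitrary: ms)
  case Nil
  then show ?case by (cases ms) (auto dest!: pr_enc_inj)
next
  case (Cons l ls)
  then show ?case by (cases ms) (auto dest!: pr_enc_inj pair_enc_inj)
qed

definition full_enc :: "'b list list \<times> nat \<Rightarrow> 'b list set" where
  "full_enc = (\<lambda>(ls, n). {pr_enc (n, lists_enc ls)})"

lemma full_enc_inj: "inj full_enc"
  unfolding inj_def full_enc_def by (auto dest!: pr_enc_inj lists_enc_inj)

lemma closure_inj:
  fixes K :: "('k,'m) ring_scheme" and e :: "'k \<Rightarrow> 'b list"
  assumes "field K" "inj_on e (carrier K)"
  shows "\<exists>(L :: (('k list \<times> nat) multiset \<Rightarrow> 'k) ring) \<psi> (d :: _ \<Rightarrow> 'b list set).
     field L \<and> (\<forall>n a. n > 0 \<longrightarrow> a \<in> carrier L \<longrightarrow> (\<exists>b\<in>carrier L. b [^]\<^bsub>L\<^esub> (n::nat) = a)) \<and>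
     \<psi> \<in> ring_hom K L \<and> inj_on d (carrier L)"
proof -
  interpret K: field K by fact
  define L where "L = K.alg_closure"
  define ic :: "'k \<Rightarrow> ('k list \<times> nat) multiset \<Rightarrow> 'k" where "ic = K.indexed_const"
  define K' where "K' = ic ` carrier K"
  have ac: "algebraic_closure L K'" and hom: "ic \<in> ring_hom K L"
    using K.alg_closureE unfolding L_def K'_def ic_def by auto
  interpret C: algebraic_closure L K' by (rule ac)
  have fL: "field L" using algebraic_closure.axioms(1)[OF ac] .
  have sf: "subfield K' L" using algebraic_closure.axioms(2)[OF ac] .
  have sr: "subring K' L" using subfieldE(1)[OF sf] .
  have acl: "algebraically_closed L"
    unfolding algebraically_closed_def algebraically_closed_axioms_def
    using C.roots_over_carrier fL by blast
  have roots: "\<forall>n a. n > 0 \<longrightarrow> a \<in> carrier L \<longrightarrow> (\<exists>b\<in>carrier L. b [^]\<^bsub>L\<^esub> (n::nat) = a)"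
    using field.alg_closed_roots[OF fL acl] by blast
  define Pol where "Pol = (\<lambda>x. SOME p. p \<in> carrier (K'[X]\<^bsub>L\<^esub>) \<and> p \<noteq> [] \<and> C.eval p x = \<zero>\<^bsub>L\<^esub>)"
  have Pol: "\<And>x. x \<in> carrier L \<Longrightarrow> Pol x \<in> carrier (K'[X]\<^bsub>L\<^esub>) \<and> Pol x \<noteq> [] \<and> C.eval (Pol x) x = \<zero>\<^bsub>L\<^esub>"
  proof -
    fix x assume x: "x \<in> carrier L"
    obtain p where "p \<in> carrier (K'[X]\<^bsub>L\<^esub>)" "p \<noteq> []" "C.eval p x = \<zero>\<^bsub>L\<^esub>"
      using C.algebraicE[OF sr x C.algebraic_extension[OF x]] by blast
    then have "\<exists>p. p \<in> carrier (K'[X]\<^bsub>L\<^esub>) \<and> p \<noteq> [] \<and> C.eval p x = \<zero>\<^bsub>L\<^esub>" by blast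
    then show "Pol x \<in> carrier (K'[X]\<^bsub>L\<^esub>) \<and> Pol x \<noteq> [] \<and> C.eval (Pol x) x = \<zero>\<^bsub>L\<^esub>"
      unfolding Pol_def by (rule someI_ex)
  qed
  have PolL: "\<And>x. x \<in> carrier L \<Longrightarrow> Pol x \<in> carrier (poly_ring L)"
    using Pol C.carrier_polynomial[OF sr] univ_poly_carrier by blast
  have PolK: "\<And>x. x \<in> carrier L \<Longrightarrow> set (Pol x) \<subseteq> K'"
    using Pol C.polynomial_incl univ_poly_carrier by blast
  define Rt where "Rt = (\<lambda>p. {y. C.is_root p y})"
  have xRt: "\<And>x. x \<in> carrier L \<Longrightarrow> x \<in> Rt (Pol x)"
    unfolding Rt_def C.is_root_def using Pol by auto
  define idx :: "_ \<Rightarrow> _ \<Rightarrow> nat" where "idx = (\<lambda>p. SOME h. inj_on h (Rt p))"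
  have idx: "\<And>x. x \<in> carrier L \<Longrightarrow> inj_on (idx (Pol x)) (Rt (Pol x))"
  proof -
    fix x assume x: "x \<in> carrier L"
    have "finite (Rt (Pol x))" unfolding Rt_def using C.finite_number_of_roots[OF PolL[OF x]] .
    then obtain h :: "_ \<Rightarrow> nat" where "inj_on h (Rt (Pol x))"
      using finite_imp_inj_to_nat_seg by blast
    then have "\<exists>h :: _ \<Rightarrow> nat. inj_on h (Rt (Pol x))" by blast
    then show "inj_on (idx (Pol x)) (Rt (Pol x))" unfolding idx_def by (rule someI_ex)
  qed
  define c2 where "c2 = (\<lambda>c. e (inv_into (carrier K) ic c))"
  have c2inj: "inj_on c2 K'"
  proof (rule inj_onI)
    fix u v assume u: "u \<in> K'" and v: "v \<in> K'" and uv: "c2 u = c2 v"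
    have iu: "inv_into (carrier K) ic u \<in> carrier K" using u unfolding K'_def by (rule inv_into_into)
    have iv: "inv_into (carrier K) ic v \<in> carrier K" using v unfolding K'_def by (rule inv_into_into)
    have "inv_into (carrier K) ic u = inv_into (carrier K) ic v"
      using uv iu iv assms(2) unfolding c2_def inj_on_def by blast
    then show "u = v" using u v unfolding K'_def by (metis f_inv_into_f)
  qed
  define d :: "_ \<Rightarrow> 'b list set" where "d = (\<lambda>x. full_enc (map c2 (Pol x), idx (Pol x) x))"
  have dinj: "inj_on d (carrier L)"
  proof (rule inj_onI)
    fix x y assume x: "x \<in> carrier L" and y: "y \<in> carrier L" and dxy: "d x = d y"
    then have m: "map c2 (Pol x) = map c2 (Pol y)" and i: "idx (Pol x) x = idx (Pol y) y"
      unfolding d_def using full_enc_inj unfolding inj_def by blast+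
    have "inj_on c2 (set (Pol x) \<union> set (Pol y))" using c2inj PolK[OF x] PolK[OF y]
      by (meson inj_on_subset le_sup_iff)
    then have pxy: "Pol x = Pol y" using m inj_on_map_eq_map by blast
    show "x = y" using idx[OF x] xRt[OF x] xRt[OF y] i unfolding pxy inj_on_def by blast
  qed
  show ?thesis using fL roots hom dinj by blast
qed

lemma field_hom_nz:
  assumes A: "field A" and B: "field B" and h: "h \<in> ring_hom A B" and x: "x \<in> carrier A" "x \<noteq> \<zero>\<^bsub>A\<^esub>"
  shows "h x \<noteq> \<zero>\<^bsub>B\<^esub>"
proof
  assume hx: "h x = \<zero>\<^bsub>B\<^esub>"
  interpret A: field A by fact
  interpret B: field B by fact
  have xu: "x \<in> Units A" using x A.field_Units by blast
  have ic: "inv\<^bsub>A\<^esub> x \<in> carrier A" using A.Units_inv_closed[OF xu] .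
  have "x \<otimes>\<^bsub>A\<^esub> inv\<^bsub>A\<^esub> x = \<one>\<^bsub>A\<^esub>" using A.Units_r_inv[OF xu] .
  then have "h x \<otimes>\<^bsub>B\<^esub> h (inv\<^bsub>A\<^esub> x) = \<one>\<^bsub>B\<^esub>"
    using ring_hom_memE(2)[OF h x(1) ic] ring_hom_memE(4)[OF h] by simp
  then have "\<zero>\<^bsub>B\<^esub> = \<one>\<^bsub>B\<^esub>" using hx B.l_null ring_hom_memE(1)[OF h ic] by simp
  then show False using B.one_not_zero by simp
qed

lemma core:
  fixes R :: "('b, 'm) ring_scheme"
  assumes cR: "cring R" and red: "reduced_ring R" and a: "a \<in> carrier R" and a0: "a \<noteq> \<zero>\<^bsub>R\<^esub>"
  shows "\<exists>(F :: 'b list set icalg) \<chi>. implicitly_closed_field F \<and> \<chi> \<in> ring_hom R F \<and> \<chi> a \<noteq> \<zero>\<^bsub>F\<^esub>"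
proof -
  obtain K :: "'b set list set ring" and \<phi> and e :: "'b set list set \<Rightarrow> 'b list" where
    K: "field K" "\<phi> \<in> ring_hom R K" "\<phi> a \<noteq> \<zero>\<^bsub>K\<^esub>" "inj_on e (carrier K)"
    using reduced_field_hom[OF cR red a a0] by blast
  obtain L :: "(('b set list set list \<times> nat) multiset \<Rightarrow> 'b set list set) ring" and \<psi>
    and d :: "_ \<Rightarrow> 'b list set" where
    L: "field L" "\<forall>n a. n > 0 \<longrightarrow> a \<in> carrier L \<longrightarrow> (\<exists>b\<in>carrier L. b [^]\<^bsub>L\<^esub> (n::nat) = a)"
       "\<psi> \<in> ring_hom K L" "inj_on d (carrier L)"
    using closure_inj[OF K(1) K(4)] by blast
  obtain F :: "'b list set icalg" where F: "implicitly_closed_field F" "d \<in> ring_hom L F"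
    using make_icf[OF L(1) L(4)] L(2) by blast
  have fF: "field F" using F(1) unfolding implicitly_closed_field_def weakly_rooted_def by blast
  have h: "d \<circ> \<psi> \<circ> \<phi> \<in> ring_hom R F"
    using ring_hom_trans[OF ring_hom_trans[OF K(2) L(3)] F(2)] by (simp add: comp_assoc)
  have pa: "\<phi> a \<in> carrier K" using ring_hom_memE(1)[OF K(2) a] .
  have "\<psi> (\<phi> a) \<noteq> \<zero>\<^bsub>L\<^esub>" using field_hom_nz[OF K(1) L(1) L(3) pa K(3)] .
  moreover have "\<psi> (\<phi> a) \<in> carrier L" using ring_hom_memE(1)[OF L(3) pa] .
  ultimately have "d (\<psi> (\<phi> a)) \<noteq> \<zero>\<^bsub>F\<^esub>" using field_hom_nz[OF L(1) fF F(2)] by blast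
  then show ?thesis using F(1) h by (intro exI[of _ F] exI[of _ "d \<circ> \<psi> \<circ> \<phi>"]) simp
qed

lemma icf_closed:
  assumes "implicitly_closed_field F" "u \<in> carrier F"
  shows "neg F u \<in> carrier F" "winv F u \<in> carrier F"
    "\<And>p. Factorial_Ring.prime (p::nat) \<Longrightarrow> wroot F p u \<in> carrier F"
proof -
  have fF: "field F" using assms(1) unfolding implicitly_closed_field_def weakly_rooted_def by blast
  interpret F: field F by fact
  have n: "neg F u = \<ominus>\<^bsub>F\<^esub> u" using assms unfolding implicitly_closed_field_def by blast
  then show "neg F u \<in> carrier F" using assms(2) by simp
  show "winv F u \<in> carrier F"
  proof (cases "u = \<zero>\<^bsub>F\<^esub>")
    case True
    then show ?thesis using assms(1) unfolding implicitly_closed_field_def by auto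
  next
    case False
    then have "winv F u = inv\<^bsub>F\<^esub> u" using assms unfolding implicitly_closed_field_def by blast
    moreover have "u \<in> Units F" using False assms(2) F.field_Units by blast
    ultimately show ?thesis using F.Units_inv_closed by simp
  qed
  fix p :: nat assume p: "Factorial_Ring.prime p"
  have "if ring_char F = p
         then wroot F p u \<in> carrier F \<and> wroot F p u [^]\<^bsub>F\<^esub> p = u
         else wroot F p u = \<zero>\<^bsub>F\<^esub>"
    using assms p unfolding implicitly_closed_field_def by blast
  then show "wroot F p u \<in> carrier F" by (auto split: if_splits)
qed

lemma part2:
  fixes R :: "'b ring"
  assumes cR: "cring R" and red: "reduced_ring R"
  shows "\<exists>B :: ('b set \<Rightarrow> 'b list set) icalg. ICM TYPE('b set) TYPE('b list set) B \<and>
               (\<exists>h. h \<in> ring_hom R (reduct B) \<and> inj_on h (carrier R))"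
proof -
  interpret R: cring R by fact
  define I :: "'b set set" where "I = {{x} | x. x \<in> carrier R \<and> x \<noteq> \<zero>\<^bsub>R\<^esub>}"
  define FC where "FC = (\<lambda>i::'b set. SOME p :: ('b list set icalg \<times> ('b \<Rightarrow> 'b list set)).
      implicitly_closed_field (fst p) \<and> snd p \<in> ring_hom R (fst p) \<and> snd p (the_elem i) \<noteq> \<zero>\<^bsub>fst p\<^esub>)"
  define Fam where "Fam = (\<lambda>i. fst (FC i))"
  define Chi where "Chi = (\<lambda>i. snd (FC i))"
  have FCp: "\<And>i. i \<in> I \<Longrightarrow> implicitly_closed_field (Fam i) \<and> Chi i \<in> ring_hom R (Fam i) \<and>
      Chi i (the_elem i) \<noteq> \<zero>\<^bsub>Fam i\<^esub>"
  proof -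
    fix i assume "i \<in> I"
    then obtain x where x: "i = {x}" "x \<in> carrier R" "x \<noteq> \<zero>\<^bsub>R\<^esub>" unfolding I_def by blast
    obtain F :: "'b list set icalg" and \<chi> where "implicitly_closed_field F" "\<chi> \<in> ring_hom R F" "\<chi> x \<noteq> \<zero>\<^bsub>F\<^esub>"
      using core[OF cR red x(2) x(3)] by blast
    then have "\<exists>p :: ('b list set icalg \<times> ('b \<Rightarrow> 'b list set)).
      implicitly_closed_field (fst p) \<and> snd p \<in> ring_hom R (fst p) \<and> snd p (the_elem i) \<noteq> \<zero>\<^bsub>fst p\<^esub>"
      using x(1) by (intro exI[of _ "(F, \<chi>)"]) simp
    then show "implicitly_closed_field (Fam i) \<and> Chi i \<in> ring_hom R (Fam i) \<and>
      Chi i (the_elem i) \<noteq> \<zero>\<^bsub>Fam i\<^esub>" unfolding Fam_def Chi_def FC_def by (rule someI_ex)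
  qed
  have Ff: "\<And>i. i \<in> I \<Longrightarrow> field (Fam i)"
  proof -
    fix i assume "i \<in> I"
    then have "implicitly_closed_field (Fam i)" using FCp by blast
    then show "field (Fam i)" unfolding implicitly_closed_field_def weakly_rooted_def by blast
  qed
  have Fr: "\<And>i. i \<in> I \<Longrightarrow> ring (Fam i)"
    by (rule cring.axioms(1)[OF domain.axioms(1)[OF field.axioms(1)[OF Ff]]])
  define B :: "('b set \<Rightarrow> 'b list set) icalg" where "B = \<lparr>carrier = (\<Pi>\<^sub>E i\<in>I. carrier (Fam i)),
     monoid.mult = (\<lambda>x y. \<lambda>i\<in>I. x i \<otimes>\<^bsub>Fam i\<^esub> y i), one = (\<lambda>i\<in>I. \<one>\<^bsub>Fam i\<^esub>),
     ring.zero = (\<lambda>i\<in>I. \<zero>\<^bsub>Fam i\<^esub>), ring.add = (\<lambda>x y. \<lambda>i\<in>I. x i \<oplus>\<^bsub>Fam i\<^esub> y i),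
     neg = (\<lambda>x. \<lambda>i\<in>I. neg (Fam i) (x i)), winv = (\<lambda>x. \<lambda>i\<in>I. winv (Fam i) (x i)),
     wroot = (\<lambda>p x. \<lambda>i\<in>I. wroot (Fam i) p (x i))\<rparr>"
  have cB: "carrier B = (\<Pi>\<^sub>E i\<in>I. carrier (Fam i))" unfolding B_def by simp
  have isa: "is_icalg B"
    unfolding is_icalg_def
  proof (intro conjI ballI allI impI)
    show "\<zero>\<^bsub>B\<^esub> \<in> carrier B"
      unfolding cB by (simp add: B_def restrict_PiE_iff ring.ring_simprules(2)[OF Fr])
    show "\<one>\<^bsub>B\<^esub> \<in> carrier B"
      unfolding cB by (simp add: B_def restrict_PiE_iff ring.ring_simprules(6)[OF Fr])
  next
    fix x y assume "x \<in> carrier B" "y \<in> carrier B"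
    then have x: "\<And>i. i \<in> I \<Longrightarrow> x i \<in> carrier (Fam i)" and y: "\<And>i. i \<in> I \<Longrightarrow> y i \<in> carrier (Fam i)"
      unfolding cB by (auto simp: PiE_mem)
    show "x \<oplus>\<^bsub>B\<^esub> y \<in> carrier B"
      unfolding cB by (simp add: B_def restrict_PiE_iff ring.ring_simprules(1)[OF Fr] x y)
    show "x \<otimes>\<^bsub>B\<^esub> y \<in> carrier B"
      unfolding cB by (simp add: B_def restrict_PiE_iff ring.ring_simprules(5)[OF Fr] x y)
  next
    fix x assume "x \<in> carrier B"
    then have x: "\<And>i. i \<in> I \<Longrightarrow> x i \<in> carrier (Fam i)" unfolding cB by (auto simp: PiE_mem)
    have icf: "\<And>i. i \<in> I \<Longrightarrow> implicitly_closed_field (Fam i)" using FCp by blast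
    show "neg B x \<in> carrier B"
      unfolding cB by (simp add: B_def restrict_PiE_iff icf_closed(1)[OF icf x])
    show "winv B x \<in> carrier B"
      unfolding cB by (simp add: B_def restrict_PiE_iff icf_closed(2)[OF icf x])
    fix p :: nat assume p: "Factorial_Ring.prime p"
    show "wroot B p x \<in> carrier B"
      unfolding cB by (simp add: B_def restrict_PiE_iff icf_closed(3)[OF icf x p])
  qed
  have emb: "embeds_into_product B I Fam (\<lambda>x. x)"
    unfolding embeds_into_product_def by (simp add: B_def)
  have icm: "ICM TYPE('b set) TYPE('b list set) B"
  proof -
    have "\<forall>i\<in>I. implicitly_closed_field (Fam i)" using FCp by blast
    then show ?thesis unfolding ICM_def using isa emb
      by (intro conjI exI[of _ I] exI[of _ Fam] exI[of _ "\<lambda>x. x"]) auto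
  qed
  define h where "h = (\<lambda>r. \<lambda>i\<in>I. Chi i r)"
  have Chic: "\<And>i r. i \<in> I \<Longrightarrow> r \<in> carrier R \<Longrightarrow> Chi i r \<in> carrier (Fam i)"
  proof -
    fix i r assume i: "i \<in> I" and r: "r \<in> carrier R"
    have "Chi i \<in> ring_hom R (Fam i)" using FCp[OF i] by blast
    then show "Chi i r \<in> carrier (Fam i)" using ring_hom_memE(1)[OF _ r] by blast
  qed
  have hH: "h \<in> ring_hom R (reduct B)"
  proof (rule ring_hom_memI)
    fix x assume "x \<in> carrier R"
    then show "h x \<in> carrier (reduct B)" unfolding h_def reduct_def B_def using Chic by auto
  next
    fix x y assume x: "x \<in> carrier R" and y: "y \<in> carrier R"
    have hm: "\<And>i. i \<in> I \<Longrightarrow> Chi i (x \<otimes>\<^bsub>R\<^esub> y) = Chi i x \<otimes>\<^bsub>Fam i\<^esub> Chi i y"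
      using FCp ring_hom_memE(2)[OF _ x y] by blast
    have ha: "\<And>i. i \<in> I \<Longrightarrow> Chi i (x \<oplus>\<^bsub>R\<^esub> y) = Chi i x \<oplus>\<^bsub>Fam i\<^esub> Chi i y"
      using FCp ring_hom_memE(3)[OF _ x y] by blast
    show "h (x \<otimes>\<^bsub>R\<^esub> y) = h x \<otimes>\<^bsub>reduct B\<^esub> h y"
      unfolding h_def reduct_def B_def by (simp add: hm cong: restrict_cong)
    show "h (x \<oplus>\<^bsub>R\<^esub> y) = h x \<oplus>\<^bsub>reduct B\<^esub> h y"
      unfolding h_def reduct_def B_def by (simp add: ha cong: restrict_cong)
  next
    have h1: "\<And>i. i \<in> I \<Longrightarrow> Chi i \<one>\<^bsub>R\<^esub> = \<one>\<^bsub>Fam i\<^esub>"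
      using FCp ring_hom_memE(4) by blast
    show "h \<one>\<^bsub>R\<^esub> = \<one>\<^bsub>reduct B\<^esub>"
      unfolding h_def reduct_def B_def by (simp add: h1 cong: restrict_cong)
  qed
  have hinj: "inj_on h (carrier R)"
  proof (rule inj_onI, rule ccontr)
    fix x y assume x: "x \<in> carrier R" and y: "y \<in> carrier R" and hxy: "h x = h y" and ne: "x \<noteq> y"
    define d where "d = x \<ominus>\<^bsub>R\<^esub> y"
    have dc: "d \<in> carrier R" unfolding d_def using x y by simp
    have d0: "d \<noteq> \<zero>\<^bsub>R\<^esub>" unfolding d_def using x y ne R.r_right_minus_eq by blast
    have iI: "{d} \<in> I" unfolding I_def using dc d0 by blast
    have hd: "Chi {d} \<in> ring_hom R (Fam {d})" and nz: "Chi {d} d \<noteq> \<zero>\<^bsub>Fam {d}\<^esub>"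
      using FCp[OF iI] by auto
    interpret Fd: ring "Fam {d}" using Fr[OF iI] .
    have xd: "x = d \<oplus>\<^bsub>R\<^esub> y" unfolding d_def using x y by (simp add: R.minus_eq R.a_assoc R.l_neg)
    have "Chi {d} x = Chi {d} d \<oplus>\<^bsub>Fam {d}\<^esub> Chi {d} y"
      using ring_hom_memE(3)[OF hd dc y] xd by simp
    moreover have "Chi {d} x = Chi {d} y" using hxy iI unfolding h_def by (metis restrict_apply')
    ultimately have "Chi {d} d \<oplus>\<^bsub>Fam {d}\<^esub> Chi {d} y = \<zero>\<^bsub>Fam {d}\<^esub> \<oplus>\<^bsub>Fam {d}\<^esub> Chi {d} y"
      using Chic[OF iI y] by simp
    then have "Chi {d} d = \<zero>\<^bsub>Fam {d}\<^esub>" using Chic[OF iI y] Chic[OF iI dc] by simp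
    then show False using nz by simp
  qed
  show ?thesis using icm hH hinj by blast
qed

theorem mainTheorem16:
  shows "(\<forall>A :: ('a, 'm) icalg_scheme.
            ICM TYPE('i) TYPE('f) A \<longrightarrow> cring (reduct A) \<and> reduced_ring (reduct A))
       \<and> (\<forall>R :: 'b ring. cring R \<and> reduced_ring R \<longrightarrow>
            (\<exists>B :: ('b set \<Rightarrow> 'b list set) icalg.
               ICM TYPE('b set) TYPE('b list set) B \<and>
               (\<exists>h. h \<in> ring_hom R (reduct B) \<and> inj_on h (carrier R))))"
  using part1 part2 by blast

end
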